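(* Let $T=(V,E)$ be a finite undirected tree, let $\mathcal{O}$ be a nonempty proper subset of $V$, and consider the infection model described in the context with source $s\in V\setminus\mathcal{O}$. Then, with probability one, a class $r\in[\mathcal{O}]$ is feasible if and only if $\operatorname{argmin}_{o\in\mathcal{O}}\tau_o\in\partial r$. In particular, almost surely at least one feasible equivalence class exists, and the set of feasible classes forms a star arrangement.
   Context: Infection model: an infection starts at time $0$ at a single node $s$ (the source). For each edge $e\in E$ there is a nonnegative random delay $\tau_e$ with a continuous (atomless) distribution, and the $\tau_e$, $e\in E$, are independent. For $u,v\in V$, $[u,v]$ denotes the set of edges (or vertices, depending on context) of the unique path in $T$ between $u$ and $v$. The infection time of $v\in V$ is $\tau_v:=\sum_{e\in[s,v]}\tau_e$. The observers are the nodes of $\mathcal{O}$. Equivalence classes: for $u,v\in V\setminus\mathcal{O}$, $u\equiv v$ iff $[u,v]\cap\mathcal{O}=\emptyset$ (vertex sets). $[\mathcal{O}]$ is the set of equivalence classes. For $r\in[\mathcal{O}]$, its boundary $\partial r$ is the set of observers adjacent to some node of $r$. For $o\in\mathcal{O}$ and a class $r$, $V_{o;r}:=\{v\in V: [o,v]\cap r=\emptyset\}$, and $T_{o;r}$ is the subtree of $T$ induced on $V_{o;r}$, rooted at $o$. A class $r$ is feasible if for every $o\in\partial r$ and every $o_1,o_2\in V_{o;r}\cap\mathcal{O}$ with $o_1$ an ancestor of $o_2$ in $T_{o;r}$, one has $\tau_{o_1}\le\tau_{o_2}$. A set $R\subset[\mathcal{O}]$ of classes is a star arrangement if $\bigcap_{r\in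 R}\partial r\neq\emptyset$. *)

theory Defs
  imports "HOL-Probability.Probability"
begin

definition is_path :: "'a set set \<Rightarrow> 'a list \<Rightarrow> 'a \<Rightarrow> 'a \<Rightarrow> bool" where
  "is_path E p u v \<longleftrightarrow> p \<noteq> [] \<and> hd p = u \<and> last p = v \<and> distinct p \<and>
     (\<forall>i. Suc i < length p \<longrightarrow> {p ! i, p ! Suc i} \<in> E)"

definition is_tree :: "'a set \<Rightarrow> 'a set set \<Rightarrow> bool" where
  "is_tree V E \<longleftrightarrow> finite V \<and>
     (\<forall>e\<in>E. \<exists>u v. e = {u, v} \<and> u \<noteq> v \<and> u \<in> V \<and> v \<in> V) \<and>
     (\<forall>u\<in>V. \<forall>v\<in>V. \<exists>!p. is_path E p u v)"

definition tree_path :: "'a set set \<Rightarrow> 'a \<Rightarrow> 'a \<Rightarrow> 'a list" where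
  "tree_path E u v = (THE p. is_path E p u v)"

definition path_verts :: "'a set set \<Rightarrow> 'a \<Rightarrow> 'a \<Rightarrow> 'a set" where
  "path_verts E u v = set (tree_path E u v)"

definition path_edges :: "'a set set \<Rightarrow> 'a \<Rightarrow> 'a \<Rightarrow> 'a set set" where
  "path_edges E u v = (let p = tree_path E u v in
     {{p ! i, p ! Suc i} | i. Suc i < length p})"

definition inf_time :: "'a set set \<Rightarrow> 'a \<Rightarrow> ('a set \<Rightarrow> real) \<Rightarrow> 'a \<Rightarrow> real" where
  "inf_time E s \<tau> v = (\<Sum>e\<in>path_edges E s v. \<tau> e)"

definition obs_classes :: "'a set \<Rightarrow> 'a set set \<Rightarrow> 'a set \<Rightarrow> 'a set set" where
  "obs_classes V E Obs = {{v \<in> V - Obs. path_verts E u v \<inter> Obs = {}} | u. u \<in> V - Obs}"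

definition boundary :: "'a set set \<Rightarrow> 'a set \<Rightarrow> 'a set \<Rightarrow> 'a set" where
  "boundary E Obs r = {ob \<in> Obs. \<exists>v\<in>r. {ob, v} \<in> E}"

definition V_or :: "'a set \<Rightarrow> 'a set set \<Rightarrow> 'a \<Rightarrow> 'a set \<Rightarrow> 'a set" where
  "V_or V E ob r = {v \<in> V. path_verts E ob v \<inter> r = {}}"

text \<open>Ancestor relation in T_{ob;r} rooted at ob: ob1 lies on the path from the root ob to ob2.\<close>
definition ancestor :: "'a set set \<Rightarrow> 'a \<Rightarrow> 'a \<Rightarrow> 'a \<Rightarrow> bool" where
  "ancestor E ob ob1 ob2 \<longleftrightarrow> ob1 \<in> path_verts E ob ob2"

definition feasible ::
  "'a set \<Rightarrow> 'a set set \<Rightarrow> 'a set \<Rightarrow> 'a \<Rightarrow> ('a set \<Rightarrow> real) \<Rightarrow> 'a set \<Rightarrow> bool" where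
  "feasible V E Obs s \<tau> r \<longleftrightarrow>
     (\<forall>ob\<in>boundary E Obs r. \<forall>ob1\<in>V_or V E ob r \<inter> Obs. \<forall>ob2\<in>V_or V E ob r \<inter> Obs.
        ancestor E ob ob1 ob2 \<longrightarrow> inf_time E s \<tau> ob1 \<le> inf_time E s \<tau> ob2)"

definition star_arrangement :: "'a set set \<Rightarrow> 'a set \<Rightarrow> 'a set set \<Rightarrow> bool" where
  "star_arrangement E Obs R \<longleftrightarrow> (\<Inter>r\<in>R. boundary E Obs r) \<noteq> {}"

end

theory Submission
  imports Defs
begin


lemma is_path_take:
  assumes "is_path E p u v" "i < length p"
  shows "is_path E (take (Suc i) p) u (p ! i)"
  using assms unfolding is_path_def
  apply (auto simp: hd_conv_nth last_conv_nth min_def)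
  apply (subgoal_tac "i = length p - 1")
   apply auto
  done

lemma is_path_drop:
  assumes "is_path E p u v" "i < length p"
  shows "is_path E (drop i p) (p ! i) v"
  using assms unfolding is_path_def
  by (auto simp: hd_drop_conv_nth last_drop)

lemma is_path_rev:
  assumes "is_path E p u v"
  shows "is_path E (rev p) v u"
proof -
  have "{rev p ! i, rev p ! Suc i} \<in> E" if "Suc i < length p" for i
  proof -
    define j where "j = length p - Suc (Suc i)"
    have "rev p ! i = p ! Suc j" "rev p ! Suc i = p ! j"
      using that by (auto simp: rev_nth j_def Suc_diff_Suc)
    moreover have "{p ! j, p ! Suc j} \<in> E" using assms that unfolding is_path_def j_def by auto
    ultimately show ?thesis by (simp add: insert_commute)
  qed
  then show ?thesis using assms unfolding is_path_def by (auto simp: hd_rev last_rev)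
qed

lemma is_path_cons:
  assumes "is_path E p a' b" "{a, a'} \<in> E" "a \<notin> set p"
  shows "is_path E (a # p) a b"
  using assms unfolding is_path_def
  apply (auto simp: hd_conv_nth)
  subgoal for i by (cases i) (auto simp: hd_conv_nth)
  done

lemma is_path_tl:
  assumes "is_path E (x # p) a b" "p \<noteq> []"
  shows "is_path E p (hd p) b" "{a, hd p} \<in> E" "x = a"
proof -
  show "is_path E p (hd p) b" using assms unfolding is_path_def
    by auto
  show "{a, hd p} \<in> E" using assms unfolding is_path_def
    by (metis hd_conv_nth length_Cons length_greater_0_conv list.sel(1) nth_Cons_0 nth_Cons_Suc zero_less_Suc Suc_mono)
  show "x = a" using assms unfolding is_path_def by auto
qed

lemma is_path_single: "is_path E [u] u u"
  unfolding is_path_def by auto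

lemma is_path_edge: "{a, b} \<in> E \<Longrightarrow> a \<noteq> b \<Longrightarrow> is_path E [a, b] a b"
  unfolding is_path_def by (auto simp: less_Suc_eq)

locale tree_ctx =
  fixes V :: "'a set" and E :: "'a set set"
  assumes tree: "is_tree V E"
begin

lemma finV: "finite V" using tree by (simp add: is_tree_def)

lemma edges_form: "\<forall>e\<in>E. \<exists>u v. e = {u, v} \<and> u \<noteq> v \<and> u \<in> V \<and> v \<in> V"
  using tree unfolding is_tree_def by (elim conjE)

lemma ex1p: "u \<in> V \<Longrightarrow> v \<in> V \<Longrightarrow> \<exists>!p. is_path E p u v"
  using tree unfolding is_tree_def by (elim conjE) simp

lemma edge_V: "e \<in> E \<Longrightarrow> e \<subseteq> V"
proof -
  assume "e \<in> E"
  then obtain x y where "e = {x, y}" "x \<in> V" "y \<in> V" using edges_form by blast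
  then show ?thesis by auto
qed

lemma edge_ne: "{a, b} \<in> E \<Longrightarrow> a \<noteq> b"
proof -
  assume "{a, b} \<in> E"
  then obtain x y where "{a, b} = {x, y}" "x \<noteq> y" using edges_form by blast
  then show "a \<noteq> b" by (auto simp: doubleton_eq_iff)
qed

lemma finE: "finite E"
proof -
  have "E \<subseteq> Pow V" using edge_V by auto
  then show ?thesis using finV by (meson finite_Pow_iff finite_subset)
qed

lemma path_in_V:
  assumes "is_path E p u v" "u \<in> V"
  shows "set p \<subseteq> V"
proof
  fix x assume "x \<in> set p"
  then obtain k where k: "k < length p" "p ! k = x" by (auto simp: in_set_conv_nth)
  show "x \<in> V"
  proof (cases k)
    case 0 then show ?thesis using assms k by (auto simp: is_path_def hd_conv_nth)
  next
    case (Suc j)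
    then have "{p ! j, p ! Suc j} \<in> E" using assms k by (auto simp: is_path_def)
    then show ?thesis using edge_V k Suc by auto
  qed
qed

lemma tp: "u \<in> V \<Longrightarrow> v \<in> V \<Longrightarrow> is_path E (tree_path E u v) u v"
  unfolding tree_path_def by (rule theI'[OF ex1p])

lemma tp_unique: "is_path E p u v \<Longrightarrow> u \<in> V \<Longrightarrow> v \<in> V \<Longrightarrow> tree_path E u v = p"
  unfolding tree_path_def by (rule the1_equality[OF ex1p])

lemma pv_V: "u \<in> V \<Longrightarrow> v \<in> V \<Longrightarrow> path_verts E u v \<subseteq> V"
  unfolding path_verts_def using tp path_in_V by blast

lemma pv_self: "u \<in> V \<Longrightarrow> path_verts E u u = {u}"
  unfolding path_verts_def using tp_unique[OF is_path_single] by auto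

lemma pv_sym: "u \<in> V \<Longrightarrow> v \<in> V \<Longrightarrow> path_verts E u v = path_verts E v u"
  unfolding path_verts_def using tp_unique[OF is_path_rev[OF tp]] by (metis set_rev)

lemma pv_ends: "u \<in> V \<Longrightarrow> v \<in> V \<Longrightarrow> u \<in> path_verts E u v \<and> v \<in> path_verts E u v"
  unfolding path_verts_def using tp[of u v] unfolding is_path_def
  by (metis hd_in_set last_in_set)

lemma pv_adj: "{a, b} \<in> E \<Longrightarrow> path_verts E a b = {a, b}"
  unfolding path_verts_def using tp_unique[OF is_path_edge] edge_ne edge_V by fastforce

lemma pv_sub:
  assumes "u \<in> V" "v \<in> V" "w \<in> path_verts E u v"
  shows "path_verts E u w \<subseteq> path_verts E u v" "path_edges E u w \<subseteq> path_edges E u v"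
    "path_verts E w v \<subseteq> path_verts E u v"
    "w \<noteq> v \<Longrightarrow> v \<notin> path_verts E u w"
proof -
  define p where "p = tree_path E u v"
  have P: "is_path E p u v" using tp assms p_def by auto
  obtain i where i: "i < length p" "p ! i = w" using assms(3) unfolding path_verts_def p_def[symmetric]
    by (auto simp: in_set_conv_nth)
  have wV: "w \<in> V" using pv_V assms by auto
  have T: "tree_path E u w = take (Suc i) p"
    using tp_unique[OF is_path_take[OF P i(1)]] assms wV i by auto
  have D: "tree_path E w v = drop i p"
    using tp_unique[OF is_path_drop[OF P i(1)]] assms wV i by auto
  show "path_verts E u w \<subseteq> path_verts E u v"
    unfolding path_verts_def T p_def[symmetric] by (rule set_take_subset)
  show "path_verts E w v \<subseteq> path_verts E u v"
    unfolding path_verts_def D p_def[symmetric] by (rule set_drop_subset)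
  show "path_edges E u w \<subseteq> path_edges E u v"
    unfolding path_edges_def Let_def T p_def[symmetric]
    by auto
  assume "w \<noteq> v"
  have dist: "distinct p" and lst: "last p = v" and ne: "p \<noteq> []" using P by (auto simp: is_path_def)
  have lv: "p ! (length p - 1) = v" using lst ne by (simp add: last_conv_nth)
  have "i \<noteq> length p - 1" using lv i \<open>w \<noteq> v\<close> by auto
  show "v \<notin> path_verts E u w"
  proof
    assume "v \<in> path_verts E u w"
    then obtain j where j: "j < Suc i" "j < length p" "p ! j = v"
      unfolding path_verts_def T by (auto simp: in_set_conv_nth)
    then have "j = length p - 1" using lv dist nth_eq_iff_index_eq ne by fastforce
    then show False using j i \<open>i \<noteq> _\<close> by auto
  qed
qed

lemma pv_tri_gen:
  assumes "is_path E p a b" "a \<in> V" "c \<in> V"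
  shows "path_verts E a c \<subseteq> set p \<union> path_verts E b c"
  using assms
proof (induction p arbitrary: a)
  case Nil then show ?case by (simp add: is_path_def)
next
  case (Cons x p)
  show ?case
  proof (cases "p = []")
    case True
    then have "a = b" using Cons.prems by (auto simp add: is_path_def)
    then show ?thesis by auto
  next
    case False
    note tl = is_path_tl[OF Cons.prems(1) False]
    have a'V: "hd p \<in> V" using edge_V tl(2) by auto
    have IH: "path_verts E (hd p) c \<subseteq> set p \<union> path_verts E b c"
      using Cons.IH[OF tl(1) a'V Cons.prems(3)] .
    show ?thesis
    proof (cases "a \<in> path_verts E (hd p) c")
      case True
      then have "path_verts E a c \<subseteq> path_verts E (hd p) c"
        using pv_sub(3)[OF a'V Cons.prems(3)] by blast
      then show ?thesis using IH by auto
    next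
      case False
      have "is_path E (a # tree_path E (hd p) c) a c"
        using is_path_cons[OF tp[OF a'V Cons.prems(3)] tl(2)] False by (simp add: path_verts_def)
      then have "path_verts E a c = insert a (path_verts E (hd p) c)"
        using tp_unique Cons.prems by (simp add: path_verts_def)
      then show ?thesis using IH tl(3) by auto
    qed
  qed
qed

lemma pv_tri: "a \<in> V \<Longrightarrow> b \<in> V \<Longrightarrow> c \<in> V \<Longrightarrow> path_verts E a c \<subseteq> path_verts E a b \<union> path_verts E b c"
  using pv_tri_gen[OF tp] unfolding path_verts_def by blast

lemma pe_E: "u \<in> V \<Longrightarrow> v \<in> V \<Longrightarrow> path_edges E u v \<subseteq> E"
  using tp[of u v] unfolding path_edges_def is_path_def Let_def by auto

lemma pe_fin: "u \<in> V \<Longrightarrow> v \<in> V \<Longrightarrow> finite (path_edges E u v)"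
  using pe_E finE finite_subset by blast

lemma pe_union: "u \<in> V \<Longrightarrow> v \<in> V \<Longrightarrow> u \<noteq> v \<Longrightarrow> \<Union>(path_edges E u v) = path_verts E u v"
proof -
  assume uv: "u \<in> V" "v \<in> V" "u \<noteq> v"
  define p where "p = tree_path E u v"
  have P: "is_path E p u v" using tp uv p_def by auto
  have len: "length p \<ge> 2"
  proof (rule ccontr)
    assume "\<not> ?thesis"
    moreover have "p \<noteq> []" using P by (auto simp: is_path_def)
    then have "length p \<noteq> 0" by simp
    ultimately have "length p = 1" by linarith
    then obtain x where "p = [x]" by (auto simp: length_Suc_conv One_nat_def)
    moreover have "hd p = u" "last p = v" using P by (simp_all add: is_path_def)
    ultimately show False using uv(3) by simp
  qed
  have "\<Union>{{p ! i, p ! Suc i} | i. Suc i < length p} = set p"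
  proof
    show "\<Union>{{p ! i, p ! Suc i} | i. Suc i < length p} \<subseteq> set p" by auto
    show "set p \<subseteq> \<Union>{{p ! i, p ! Suc i} | i. Suc i < length p}"
    proof
      fix x assume "x \<in> set p"
      then obtain k where k: "k < length p" "p ! k = x" by (auto simp: in_set_conv_nth)
      show "x \<in> \<Union>{{p ! i, p ! Suc i} | i. Suc i < length p}"
      proof (cases k)
        case 0 then show ?thesis
          by (intro UnionI[of "{p!0, p!Suc 0}"]) (use k len in auto)
      next
        case (Suc j) then show ?thesis
          by (intro UnionI[of "{p!j, p!Suc j}"]) (use k in auto)
      qed
    qed
  qed
  then show ?thesis unfolding path_edges_def path_verts_def Let_def p_def[symmetric] by simp
qed

lemma pe_inj:
  assumes "u \<in> V" "v \<in> V" "w \<in> V" "u \<noteq> v" "u \<noteq> w" "path_edges E u v = path_edges E u w"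
  shows "v = w"
proof (rule ccontr)
  assume "v \<noteq> w"
  have eq: "path_verts E u v = path_verts E u w" using pe_union assms by metis
  have "w \<in> path_verts E u v" using eq pv_ends assms by auto
  then have "v \<notin> path_verts E u w" using pv_sub(4) assms \<open>v \<noteq> w\<close> by metis
  then show False using eq pv_ends assms by auto
qed

end



lemma prob_sum_neq:
  fixes M :: "'w measure" and X :: "'i \<Rightarrow> 'w \<Rightarrow> real"
  assumes P: "prob_space M"
    and indep: "prob_space.indep_vars M (\<lambda>_. borel) X E"
    and fin: "finite E"
    and atomless: "\<forall>e\<in>E. \<forall>x. measure M {\<omega> \<in> space M. X e \<omega> = x} = 0"
    and AB: "A \<subseteq> E" "B \<subseteq> E" "e0 \<in> A" "e0 \<notin> B"
  shows "AE \<omega> in M. (\<Sum>e\<in>A. X e \<omega>) \<noteq> (\<Sum>e\<in>B. X e \<omega>)"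
proof -
  interpret prob_space M by (rule P)
  have E0: "E \<noteq> {}" using AB by auto
  define Y where [abs_def]: "Y i \<omega> = (if i \<in> E then X i \<omega> else 0)" for i \<omega>
  { fix i have "i \<in> E \<Longrightarrow> random_variable borel (X i)"
    using indep by (auto simp: indep_vars_def) }
  note rv_X = this
  { fix i have "random_variable borel (Y i)"
    by (cases "i\<in>E") (auto simp: Y_def rv_X) }
  note rv_Y = this[measurable]
  interpret Y: prob_space "distr M borel (Y i)" for i
    by (auto intro!: prob_space_distr)
  interpret product_sigma_finite "\<lambda>i. distr M borel (Y i)" ..
  have indep_Y: "indep_vars (\<lambda>i. borel) Y E"
    by (rule indep_vars_cong[THEN iffD1, OF _ _ _ indep]) (auto simp: Y_def)
  have dist: "distr M (Pi\<^sub>M E (\<lambda>i. borel)) (\<lambda>x. \<lambda>i\<in>E. Y i x) = Pi\<^sub>M E (\<lambda>i. distr M borel (Y i))"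
    using indep_vars_iff_distr_eq_PiM[THEN iffD1, OF E0 rv_Y indep_Y] .
  define S where "S = {x \<in> space (Pi\<^sub>M E (\<lambda>i. borel :: real measure)). (\<Sum>e\<in>A. x e) = (\<Sum>e\<in>B. x e)}"
  have Sm: "S \<in> sets (Pi\<^sub>M E (\<lambda>i. borel :: real measure))"
  proof -
    have m1: "(\<lambda>x. \<Sum>e\<in>A. x e) \<in> borel_measurable (Pi\<^sub>M E (\<lambda>i. borel :: real measure))"
      using AB by (intro borel_measurable_sum) (auto intro!: measurable_component_singleton)
    have m2: "(\<lambda>x. \<Sum>e\<in>B. x e) \<in> borel_measurable (Pi\<^sub>M E (\<lambda>i. borel :: real measure))"
      using AB by (intro borel_measurable_sum) (auto intro!: measurable_component_singleton)
    show ?thesis unfolding S_def using m1 m2 by measurable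
  qed
  define N where "N = {\<omega> \<in> space M. (\<Sum>e\<in>A. X e \<omega>) = (\<Sum>e\<in>B. X e \<omega>)}"
  have N_eq: "N = (\<lambda>x. \<lambda>i\<in>E. Y i x) -` S \<inter> space M"
    using AB by (auto simp: N_def S_def Y_def space_PiM subset_iff intro!: sum.cong)
  have Nm: "N \<in> sets M"
    unfolding N_eq by (rule measurable_sets[OF _ Sm]) measurable
  have "emeasure M N = emeasure (distr M (Pi\<^sub>M E (\<lambda>i. borel)) (\<lambda>x. \<lambda>i\<in>E. Y i x)) S"
    unfolding N_eq by (rule emeasure_distr[symmetric]) (auto simp: Sm)
  also have "\<dots> = emeasure (Pi\<^sub>M E (\<lambda>i. distr M borel (Y i))) S"
    by (simp add: dist)
  also have "\<dots> = (\<integral>\<^sup>+x. indicator S x \<partial>Pi\<^sub>M E (\<lambda>i. distr M borel (Y i)))"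
    using Sm by (simp add: sets_PiM_cong[of E E "\<lambda>i. distr M borel (Y i)" "\<lambda>i. borel"])
  also have "E = insert e0 (E - {e0})" using AB by auto
  also have "(\<integral>\<^sup>+x. indicator S x \<partial>Pi\<^sub>M (insert e0 (E - {e0})) (\<lambda>i. distr M borel (Y i)))
     = (\<integral>\<^sup>+ x. (\<integral>\<^sup>+ y. indicator S (x(e0 := y)) \<partial>(distr M borel (Y e0))) \<partial>(Pi\<^sub>M (E - {e0}) (\<lambda>i. distr M borel (Y i))))"
    apply (rule product_nn_integral_insert)
    using fin Sm \<open>E = _\<close> by (auto simp: sets_PiM_cong[of _ _ "\<lambda>i. distr M borel (Y i)" "\<lambda>i. borel"])
  also have "\<dots> = (\<integral>\<^sup>+ x. 0 \<partial>(Pi\<^sub>M (E - {e0}) (\<lambda>i. distr M borel (Y i))))"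
  proof (rule nn_integral_cong)
    fix x assume x: "x \<in> space (Pi\<^sub>M (E - {e0}) (\<lambda>i. distr M borel (Y i)))"
    define c where "c = (\<Sum>e\<in>B. x e) - (\<Sum>e\<in>A - {e0}. x e)"
    have "\<And>y. indicator S (x(e0 := y)) = (indicator {c} y :: ennreal)"
    proof -
      fix y
      have sp: "x(e0 := y) \<in> space (Pi\<^sub>M E (\<lambda>i. borel :: real measure))"
        using x AB by (auto simp: space_PiM PiE_def extensional_def)
      have "(\<Sum>e\<in>A. (x(e0 := y)) e) = y + (\<Sum>e\<in>A - {e0}. x e)"
        using AB fin finite_subset[OF AB(1) fin]
        by (simp add: sum.remove[of A e0])
      moreover have "(\<Sum>e\<in>B. (x(e0 := y)) e) = (\<Sum>e\<in>B. x e)"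
        using AB by (intro sum.cong) auto
      ultimately show "indicator S (x(e0 := y)) = (indicator {c} y :: ennreal)"
        using sp by (auto simp: S_def c_def indicator_def)
    qed
    then have "(\<integral>\<^sup>+ y. indicator S (x(e0 := y)) \<partial>(distr M borel (Y e0))) = emeasure (distr M borel (Y e0)) {c}"
      by simp
    also have "\<dots> = emeasure M {\<omega> \<in> space M. X e0 \<omega> = c}"
      using rv_X[of e0] AB by (subst emeasure_distr) (auto intro!: arg_cong[where f="emeasure M"] simp: Y_def AB(1)[THEN subsetD, OF AB(3)])
    also have "\<dots> = 0"
      using atomless AB rv_X[of e0] by (simp add: emeasure_eq_measure subset_iff)
    finally show "(\<integral>\<^sup>+ y. indicator S (x(e0 := y)) \<partial>(distr M borel (Y e0))) = 0" .
  qed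
  also have "\<dots> = 0" by simp
  finally have "emeasure M N = 0" .
  then show ?thesis
    by (subst AE_iff_measurable[OF Nm]) (auto simp: N_def)
qed




context tree_ctx begin

lemma class_path_in:
  assumes u: "u \<in> V - Obs" and r: "r = {v \<in> V - Obs. path_verts E u v \<inter> Obs = {}}"
    and x: "x \<in> r"
  shows "path_verts E u x \<subseteq> r"
proof
  fix z assume z: "z \<in> path_verts E u x"
  have xV: "x \<in> V" using x r by auto
  have zV: "z \<in> V" using pv_V[of u x] u xV z by auto
  have "path_verts E u z \<subseteq> path_verts E u x" using pv_sub(1)[of u x z] u xV z by auto
  then have "path_verts E u z \<inter> Obs = {}" using x r by auto
  moreover have "z \<in> path_verts E u z" using pv_ends u zV by auto
  ultimately show "z \<in> r" using r zV by auto
qed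

lemma class_conn:
  assumes u: "u \<in> V - Obs" and r: "r = {v \<in> V - Obs. path_verts E u v \<inter> Obs = {}}"
    and x: "x \<in> r" and y: "y \<in> r"
  shows "path_verts E x y \<subseteq> r"
proof -
  have xV: "x \<in> V" and yV: "y \<in> V" using x y r by auto
  have "path_verts E x y \<subseteq> path_verts E x u \<union> path_verts E u y" using pv_tri xV yV u by auto
  also have "path_verts E x u = path_verts E u x" using pv_sym xV u by auto
  finally show ?thesis using class_path_in[OF u r x] class_path_in[OF u r y] by auto
qed

lemma pv_take:
  assumes "u \<in> V" "v \<in> V" "i < length (tree_path E u v)"
  shows "path_verts E u (tree_path E u v ! i) = set (take (Suc i) (tree_path E u v))"
proof -
  have P: "is_path E (tree_path E u v) u v" using tp assms by auto
  have "tree_path E u v ! i \<in> V" using path_in_V[OF P] assms nth_mem by blast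
  then show ?thesis unfolding path_verts_def
    using tp_unique[OF is_path_take[OF P assms(3)]] assms by auto
qed

lemma pv_drop:
  assumes "u \<in> V" "v \<in> V" "i < length (tree_path E u v)"
  shows "path_verts E (tree_path E u v ! i) v = set (drop i (tree_path E u v))"
proof -
  have P: "is_path E (tree_path E u v) u v" using tp assms by auto
  have "tree_path E u v ! i \<in> V" using path_in_V[OF P] assms nth_mem by blast
  then show ?thesis unfolding path_verts_def
    using tp_unique[OF is_path_drop[OF P assms(3)]] assms by auto
qed

lemma main_det:
  fixes \<tau> :: "'a set \<Rightarrow> real" and Obs :: "'a set"
  assumes obs: "Obs \<subseteq> V" "Obs \<noteq> {}" and src: "s \<in> V - Obs"
    and nonneg: "\<forall>e\<in>E. \<tau> e \<ge> 0"
    and dist: "\<forall>o1\<in>Obs. \<forall>o2\<in>Obs. o1 \<noteq> o2 \<longrightarrow> inf_time E s \<tau> o1 \<noteq> inf_time E s \<tau> o2"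
  shows "(\<forall>r\<in>obs_classes V E Obs.
              feasible V E Obs s \<tau> r \<longleftrightarrow>
              arg_min_on (\<lambda>ob. inf_time E s \<tau> ob) Obs \<in> boundary E Obs r)
         \<and> (\<exists>r\<in>obs_classes V E Obs. feasible V E Obs s \<tau> r)
         \<and> star_arrangement E Obs {r \<in> obs_classes V E Obs. feasible V E Obs s \<tau> r}"
proof -
  define t where "t = inf_time E s \<tau>"
  define om where "om = arg_min_on t Obs"
  have finO: "finite Obs" using obs finV finite_subset by blast
  have sV: "s \<in> V" using src by auto
  have omO: "om \<in> Obs" unfolding om_def using arg_min_if_finite(1)[OF finO obs(2)] .
  have omV: "om \<in> V" using omO obs by auto
  have minle: "\<And>ob. ob \<in> Obs \<Longrightarrow> t om \<le> t ob" unfolding om_def using arg_min_least[OF finO obs(2)] by blast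
  have minlt: "\<And>ob. ob \<in> Obs \<Longrightarrow> ob \<noteq> om \<Longrightarrow> t om < t ob"
    using minle dist omO unfolding t_def by (metis order_le_less)
  have Sub: "\<And>x y. x \<in> V \<Longrightarrow> y \<in> V \<Longrightarrow> x \<in> path_verts E s y \<Longrightarrow> t x \<le> t y"
  proof -
    fix x y assume xy: "x \<in> V" "y \<in> V" "x \<in> path_verts E s y"
    have "path_edges E s x \<subseteq> path_edges E s y" using pv_sub(2)[OF sV xy(2,3)] .
    moreover have "path_edges E s y \<subseteq> E" using pe_E sV xy by auto
    ultimately show "t x \<le> t y" unfolding t_def inf_time_def
      using pe_fin[OF sV xy(2)] nonneg by (intro sum_mono2) auto
  qed
  have K: "\<And>ob. ob \<in> Obs \<Longrightarrow> ob \<in> path_verts E s om \<Longrightarrow> ob = om"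
  proof (rule ccontr)
    fix ob assume ob: "ob \<in> Obs" "ob \<in> path_verts E s om" "ob \<noteq> om"
    have "t ob \<le> t om" using Sub ob obs omV by auto
    then show False using minlt ob by force
  qed
  have Ks: "\<And>ob. ob \<in> Obs \<Longrightarrow> ob \<in> path_verts E om s \<Longrightarrow> ob = om"
    using K pv_sym sV omV by auto
  have iff: "feasible V E Obs s \<tau> r \<longleftrightarrow> om \<in> boundary E Obs r"
    if u: "u \<in> V - Obs" and r: "r = {v \<in> V - Obs. path_verts E u v \<inter> Obs = {}}" for u r
  proof
    have uV: "u \<in> V" using u by auto
    assume feas: "feasible V E Obs s \<tau> r"
    show "om \<in> boundary E Obs r"
    proof (rule ccontr)
      assume nb: "om \<notin> boundary E Obs r"
      define p where "p = tree_path E u om"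
      have P: "is_path E p u om" using tp uV omV p_def by auto
      have ex: "\<exists>k. k < length p \<and> p ! k \<in> Obs"
        using P omO unfolding is_path_def by (intro exI[of _ "length p - 1"]) (auto simp: last_conv_nth)
      define k where "k = (LEAST k. k < length p \<and> p ! k \<in> Obs)"
      have k: "k < length p" "p ! k \<in> Obs" using LeastI_ex[OF ex] unfolding k_def by auto
      have kmin: "\<And>i. i < k \<Longrightarrow> p ! i \<notin> Obs"
        using k not_less_Least[of _ "\<lambda>k. k < length p \<and> p ! k \<in> Obs"] unfolding k_def[symmetric]
        by (meson less_trans)
      have "p ! 0 = u" using P by (auto simp: is_path_def hd_conv_nth)
      then have "k \<noteq> 0" using k u by (metis DiffE)
      then obtain j where j: "k = Suc j" by (cases k) auto
      define w where "w = p ! k"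
      define v' where "v' = p ! j"
      have pV: "set p \<subseteq> V" using path_in_V[OF P uV] .
      have wV: "w \<in> V" and v'V: "v' \<in> V" using pV k j unfolding w_def v'_def by auto
      have v'r: "v' \<in> r"
      proof -
        have "path_verts E u v' = set (take (Suc j) p)"
          using pv_take[OF uV omV, of j] k j unfolding p_def v'_def by auto
        moreover have "set (take (Suc j) p) \<inter> Obs = {}"
          using kmin j k by (auto simp: in_set_conv_nth)
        moreover have "v' \<notin> Obs" using kmin j unfolding v'_def by auto
        ultimately show ?thesis using r v'V by auto
      qed
      have "{p ! j, p ! Suc j} \<in> E" using P k j unfolding is_path_def by auto
      then have wE: "{w, v'} \<in> E" unfolding w_def v'_def j by (simp add: insert_commute)
      have wB: "w \<in> boundary E Obs r" unfolding boundary_def using k v'r wE w_def by auto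
      have wom: "w \<noteq> om" using wB nb by auto
      have dropr: "path_verts E w om \<inter> r = {}"
      proof -
        have "path_verts E w om = set (drop k p)"
          using pv_drop[OF uV omV, of k] k unfolding p_def w_def by auto
        moreover have "x \<notin> r" if xin: "x \<in> set (drop k p)" for x
        proof -
          obtain i' where i': "i' < length (drop k p)" "drop k p ! i' = x"
            using xin unfolding in_set_conv_nth by blast
          define i where "i = k + i'"
          have i: "i < length p" "k \<le> i" "p ! i = x" using i' k unfolding i_def by auto
          have "path_verts E u x = set (take (Suc i) p)"
            using pv_take[OF uV omV, of i] i unfolding p_def by auto
          moreover have "w \<in> set (take (Suc i) p)" using i k unfolding w_def
            by (auto simp: in_set_conv_nth intro!: exI[of _ k])
          ultimately show ?thesis using r k w_def by auto
        qed
        ultimately show ?thesis by auto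
      qed
      have "w \<in> V_or V E w r \<inter> Obs" using pv_self[OF wV] k w_def wV r unfolding V_or_def by auto
      moreover have "om \<in> V_or V E w r \<inter> Obs" using dropr omV omO unfolding V_or_def by auto
      moreover have "ancestor E w w om" unfolding ancestor_def using pv_ends wV omV by auto
      ultimately have "inf_time E s \<tau> w \<le> inf_time E s \<tau> om"
        using feas wB unfolding feasible_def by blast
      then show False using minlt[of w] k w_def wom unfolding t_def by auto
    qed
  next
    have uV: "u \<in> V" using u by auto
    assume omB: "om \<in> boundary E Obs r"
    then obtain vs where vs: "vs \<in> r" "{om, vs} \<in> E" unfolding boundary_def by auto
    have rO: "r \<inter> Obs = {}" "r \<subseteq> V" using r by auto
    have vsV: "vs \<in> V" using vs rO by auto
    have X1: "path_verts E v om \<subseteq> r \<union> {vs, om}" if "v \<in> r" for v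
    proof -
      have vV: "v \<in> V" using that rO by auto
      have "path_verts E v om \<subseteq> path_verts E v vs \<union> path_verts E vs om" using pv_tri vV vsV omV by auto
      moreover have "path_verts E v vs \<subseteq> r" using class_conn[OF u r that vs(1)] .
      moreover have "path_verts E vs om = {vs, om}" using pv_adj[of vs om] vs(2) by (simp add: insert_commute)
      ultimately show ?thesis by auto
    qed
    show "feasible V E Obs s \<tau> r"
      unfolding feasible_def
    proof (intro ballI impI)
      fix ob o1 o2
      assume oB: "ob \<in> boundary E Obs r" and o1: "o1 \<in> V_or V E ob r \<inter> Obs" and o2: "o2 \<in> V_or V E ob r \<inter> Obs"
        and anc: "ancestor E ob o1 o2"
      obtain v where v: "v \<in> r" "{ob, v} \<in> E" using oB unfolding boundary_def by auto
      have oO: "ob \<in> Obs" using oB unfolding boundary_def by auto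
      have oV: "ob \<in> V" and vV: "v \<in> V" using oO obs v rO by auto
      have o1V: "o1 \<in> V" "o1 \<in> Obs" and o2V: "o2 \<in> V" "o2 \<in> Obs" using o1 o2 unfolding V_or_def by auto
      have o1p: "o1 \<in> path_verts E ob o2" using anc unfolding ancestor_def .
      show "inf_time E s \<tau> o1 \<le> inf_time E s \<tau> o2"
      proof (cases "ob = om")
        case True
        have "o1 \<in> path_verts E om s \<union> path_verts E s o2" using pv_tri[OF omV sV o2V(1)] o1p True by auto
        then show ?thesis
        proof
          assume "o1 \<in> path_verts E om s"
          then have "o1 = om" using Ks o1V by auto
          then show ?thesis using minle[of o2] o2V by (simp add: t_def)
        next
          assume "o1 \<in> path_verts E s o2"
          then show ?thesis using Sub[of o1 o2] o1V o2V by (simp add: t_def)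
        qed
      next
        case False
        show ?thesis
        proof (cases "o1 \<in> path_verts E s o2")
          case True
          then show ?thesis using Sub[of o1 o2] o1V o2V by (simp add: t_def)
        next
          case notin: False
          have "o1 \<in> path_verts E ob s" using pv_tri[OF oV sV o2V(1)] o1p notin by auto
          then have "o1 \<in> path_verts E ob om \<union> path_verts E om s" using pv_tri[OF oV omV sV] by auto
          then show ?thesis
          proof
            assume "o1 \<in> path_verts E om s"
            then have "o1 = om" using Ks o1V by auto
            then show ?thesis using minle[of o2] o2V by (simp add: t_def)
          next
            assume a: "o1 \<in> path_verts E ob om"
            have "path_verts E ob om \<subseteq> path_verts E ob v \<union> path_verts E v om" using pv_tri oV vV omV by auto
            also have "path_verts E ob v = {ob, v}" using pv_adj v(2) by auto
            finally have "o1 \<in> {ob, v} \<union> r \<union> {vs, om}" using a X1[OF v(1)] by auto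
            then have "o1 = ob \<or> o1 = om" using o1V rO v(1) vs(1) by auto
            then show ?thesis
            proof
              assume "o1 = om" then show ?thesis using minle[of o2] o2V by (simp add: t_def)
            next
              assume o1o: "o1 = ob"
              have ov: "ob \<in> path_verts E v o2"
              proof (rule ccontr)
                assume n: "ob \<notin> path_verts E v o2"
                have "is_path E (ob # tree_path E v o2) ob o2"
                  using is_path_cons[OF tp[OF vV o2V(1)] v(2)] n unfolding path_verts_def by auto
                then have "path_verts E ob o2 = insert ob (path_verts E v o2)"
                  using tp_unique oV o2V unfolding path_verts_def by auto
                then have "v \<in> path_verts E ob o2" using pv_ends vV o2V by auto
                then show False using o2 v(1) unfolding V_or_def by auto
              qed
              have "ob \<in> path_verts E v s \<union> path_verts E s o2" using pv_tri[OF vV sV o2V(1)] ov by auto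
              then show ?thesis
              proof
                assume "ob \<in> path_verts E s o2"
                then show ?thesis using Sub[of ob o2] oV o2V o1o by (simp add: t_def)
              next
                assume "ob \<in> path_verts E v s"
                then have "ob \<in> path_verts E v om \<union> path_verts E om s" using pv_tri[OF vV omV sV] by auto
                moreover have "ob \<notin> path_verts E om s" using Ks oO \<open>ob \<noteq> om\<close> by auto
                moreover have "ob \<notin> r \<union> {vs, om}" using oO rO vs(1) \<open>ob \<noteq> om\<close> by auto
                ultimately show ?thesis using X1[OF v(1)] by auto
              qed
            qed
          qed
        qed
      qed
    qed
  qed
  have allr: "\<forall>r\<in>obs_classes V E Obs. feasible V E Obs s \<tau> r \<longleftrightarrow> om \<in> boundary E Obs r"
    unfolding obs_classes_def using iff by blast
  define rs where "rs = {v \<in> V - Obs. path_verts E s v \<inter> Obs = {}}"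
  have rsC: "rs \<in> obs_classes V E Obs" unfolding obs_classes_def rs_def using src by auto
  have omrs: "om \<in> boundary E Obs rs"
  proof -
    define p where "p = tree_path E s om"
    have P: "is_path E p s om" using tp sV omV p_def by auto
    have len: "length p \<ge> 2"
    proof (rule ccontr)
      assume "\<not> ?thesis"
      moreover have "p \<noteq> []" using P by (auto simp: is_path_def)
      then have "length p \<noteq> 0" by simp
      ultimately have "length p = 1" by linarith
      then obtain x where "p = [x]" by (auto simp: length_Suc_conv One_nat_def)
      moreover have "hd p = s" "last p = om" using P by (simp_all add: is_path_def)
      ultimately show False using src omO by auto
    qed
    then obtain m where m: "length p = Suc (Suc m)" by (metis add_2_eq_Suc le_Suc_ex)
    define v' where "v' = p ! m"
    have lst: "p ! Suc m = om" using P m by (auto simp: is_path_def last_conv_nth)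
    have dp: "distinct p" using P by (auto simp: is_path_def)
    have pV: "set p \<subseteq> V" using path_in_V[OF P sV] .
    have v'V: "v' \<in> V" using pV m v'_def by auto
    have pvv: "path_verts E s v' = set (take (Suc m) p)"
      using pv_take[OF sV omV, of m] m unfolding p_def v'_def by auto
    have noobs: "set (take (Suc m) p) \<inter> Obs = {}"
    proof (rule ccontr)
      assume "\<not> ?thesis"
      then obtain i where i: "i < Suc m" "p ! i \<in> Obs" by (auto simp: in_set_conv_nth)
      have "p ! i \<in> path_verts E s om" unfolding path_verts_def p_def[symmetric] using i m by auto
      then have "p ! i = om" using K i by auto
      then have "i = Suc m" using lst dp m i nth_eq_iff_index_eq by fastforce
      then show False using i by auto
    qed
    have "take (Suc m) p ! m \<in> set (take (Suc m) p)" using m by (intro nth_mem) simp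
    then have "v' \<in> set (take (Suc m) p)" unfolding v'_def by simp
    then have "v' \<in> rs" unfolding rs_def using v'V noobs pvv by auto
    moreover have "{p ! m, p ! Suc m} \<in> E" using P m unfolding is_path_def by auto
    ultimately show ?thesis unfolding boundary_def using omO lst v'_def by (auto simp: insert_commute)
  qed
  have ex: "\<exists>r\<in>obs_classes V E Obs. feasible V E Obs s \<tau> r" using allr rsC omrs by blast
  have star: "star_arrangement E Obs {r \<in> obs_classes V E Obs. feasible V E Obs s \<tau> r}"
    unfolding star_arrangement_def using allr by blast
  show ?thesis using allr ex star unfolding om_def t_def by blast
qed

end


theorem theorem1:
  fixes V :: "'a set" and E :: "'a set set" and Obs :: "'a set" and s :: 'a
    and M :: "'w measure" and X :: "'a set \<Rightarrow> 'w \<Rightarrow> real"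
  assumes tree: "is_tree V E"
    and obs: "Obs \<subseteq> V" "Obs \<noteq> {}" "Obs \<noteq> V"
    and src: "s \<in> V - Obs"
    and P: "prob_space M"
    and indep: "prob_space.indep_vars M (\<lambda>_. borel) X E"
    and atomless: "\<forall>e\<in>E. \<forall>x. measure M {\<omega> \<in> space M. X e \<omega> = x} = 0"
    and nonneg: "\<forall>e\<in>E. AE \<omega> in M. X e \<omega> \<ge> 0"
  shows "AE \<omega> in M.
           (\<forall>r\<in>obs_classes V E Obs.
              feasible V E Obs s (\<lambda>e. X e \<omega>) r \<longleftrightarrow>
              arg_min_on (\<lambda>ob. inf_time E s (\<lambda>e. X e \<omega>) ob) Obs \<in> boundary E Obs r)
         \<and> (\<exists>r\<in>obs_classes V E Obs. feasible V E Obs s (\<lambda>e. X e \<omega>) r)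
         \<and> star_arrangement E Obs {r \<in> obs_classes V E Obs. feasible V E Obs s (\<lambda>e. X e \<omega>) r}"
proof -
  interpret T: tree_ctx V E by unfold_locales (rule tree)
  have finO: "finite Obs" using obs(1) T.finV finite_subset by blast
  have sV: "s \<in> V" using src by auto
  have AEnn: "AE \<omega> in M. \<forall>e\<in>E. X e \<omega> \<ge> 0"
    using nonneg by (intro AE_finite_allI[OF T.finE]) auto
  have AEd: "AE \<omega> in M. \<forall>o1\<in>Obs. \<forall>o2\<in>Obs. o1 \<noteq> o2 \<longrightarrow>
      inf_time E s (\<lambda>e. X e \<omega>) o1 \<noteq> inf_time E s (\<lambda>e. X e \<omega>) o2"
  proof (intro AE_finite_allI[OF finO])
    fix o1 o2 assume o1: "o1 \<in> Obs" and o2: "o2 \<in> Obs"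
    show "AE \<omega> in M. o1 \<noteq> o2 \<longrightarrow> inf_time E s (\<lambda>e. X e \<omega>) o1 \<noteq> inf_time E s (\<lambda>e. X e \<omega>) o2"
    proof (cases "o1 = o2")
      case True then show ?thesis by simp
    next
      case False
      have V12: "o1 \<in> V" "o2 \<in> V" using o1 o2 obs by auto
      have ne: "path_edges E s o1 \<noteq> path_edges E s o2"
        using T.pe_inj[OF sV V12] False src o1 o2 by auto
      have sub: "path_edges E s o1 \<subseteq> E" "path_edges E s o2 \<subseteq> E" using T.pe_E sV V12 by auto
      from ne obtain e0 where "e0 \<in> path_edges E s o1 - path_edges E s o2 \<or> e0 \<in> path_edges E s o2 - path_edges E s o1"
        by blast
      then have "AE \<omega> in M. inf_time E s (\<lambda>e. X e \<omega>) o1 \<noteq> inf_time E s (\<lambda>e. X e \<omega>) o2"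
      proof
        assume "e0 \<in> path_edges E s o1 - path_edges E s o2"
        then show ?thesis unfolding inf_time_def
          using prob_sum_neq[OF P indep T.finE atomless sub(1) sub(2), of e0] by auto
      next
        assume "e0 \<in> path_edges E s o2 - path_edges E s o1"
        then have "AE \<omega> in M. (\<Sum>e\<in>path_edges E s o2. X e \<omega>) \<noteq> (\<Sum>e\<in>path_edges E s o1. X e \<omega>)"
          using prob_sum_neq[OF P indep T.finE atomless sub(2) sub(1), of e0] by auto
        then show ?thesis unfolding inf_time_def by (rule AE_mp) (auto intro!: AE_I2)
      qed
      then show ?thesis by (rule AE_mp) (auto intro!: AE_I2)
    qed
  qed
  show ?thesis
    using AEnn AEd
  proof eventually_elim
    case (elim \<omega>)
    show ?case by (rule T.main_det[OF obs(1,2) src]) (use elim in auto)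
  qed
qed

end
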